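(* The action of $O_d(\mathbb C)$ on $U_d(\mathbb C)\subset V$ is free.
   Context: Fix $d\ge2$. $V=\mathbb C^d\oplus\mathfrak{so}(d,\mathbb C)$, elements $(v,M)$ with $v=(c_1,\dots,c_d)^\top$, $M$ complex skew-symmetric, $M_{ij}=c_{ij}=-M_{ji}$ for $i<j$; $O_d(\mathbb C)=\{A\in\mathbb C^{d\times d}:AA^\top=I\}$ acts by $A\cdot(v,M)=(Av,AMA^\top)$. $L^{(1)}=\{c_1=\dots=c_{d-1}=0\}$, and for $2\le i\le d-1$, $L^{(i)}=\{(v,M)\in L^{(i-1)}:c_{k(d-i+2)}=0,\ 1\le k\le d-i\}$. Let $f_1=c_1^2+\dots+c_d^2$; for $2\le i\le d-1$ let $f_i$ be the $O_d(\mathbb C)$-invariant rational function on $V$ with $f_i|_{L^{(i-1)}}=c_{1(d-i+2)}^2+\dots+c_{(d-i+1)(d-i+2)}^2$; let $f_d$ be the invariant rational function with $f_d|_{L^{(d-1)}}=c_{12}^2$ (these exist and are uniquely determined). $U_d(\mathbb C)$ is the set of points in the domain of every $f_k$ with $\prod_kf_k\neq0$. An action is free if all stabilizers are trivial. *)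

theory Defs
  imports Complex_Main
begin

text \<open>Points of V = C^d (+) so(d,C). A point is a pair (v, M) with
  v :: nat => complex (coordinates c_1..c_d, indices 1..d) and
  M :: nat => nat => complex (entries M i j, indices 1..d), M skew-symmetric.\<close>

type_synonym pt = "(nat \<Rightarrow> complex) \<times> (nat \<Rightarrow> nat \<Rightarrow> complex)"

definition Vsp :: "nat \<Rightarrow> pt set" where
  "Vsp d = {(v, M). (\<forall>i. i \<notin> {1..d} \<longrightarrow> v i = 0)
                  \<and> (\<forall>i j. M i j = - M j i)
                  \<and> (\<forall>i j. (i \<notin> {1..d} \<or> j \<notin> {1..d}) \<longrightarrow> M i j = 0)}"

definition Od :: "nat \<Rightarrow> (nat \<Rightarrow> nat \<Rightarrow> complex) set" where
  "Od d = {A. (\<forall>i j. (i \<notin> {1..d} \<or> j \<notin> {1..d}) \<longrightarrow> A i j = 0)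
            \<and> (\<forall>i\<in>{1..d}. \<forall>j\<in>{1..d}.
                 (\<Sum>k=1..d. A i k * A j k) = (if i = j then 1 else 0))}"

definition idm :: "nat \<Rightarrow> nat \<Rightarrow> nat \<Rightarrow> complex" where
  "idm d = (\<lambda>i j. if i = j \<and> i \<in> {1..d} then 1 else 0)"

definition act :: "nat \<Rightarrow> (nat \<Rightarrow> nat \<Rightarrow> complex) \<Rightarrow> pt \<Rightarrow> pt" where
  "act d A x = (\<lambda>i. \<Sum>j=1..d. A i j * fst x j,
                \<lambda>i l. \<Sum>j=1..d. \<Sum>k=1..d. A i j * snd x j k * A l k)"

inductive_set polyfun :: "nat \<Rightarrow> (pt \<Rightarrow> complex) set" for d where
  const: "(\<lambda>x. c) \<in> polyfun d"
| coord_v: "i \<in> {1..d} \<Longrightarrow> (\<lambda>x. fst x i) \<in> polyfun d"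
| coord_M: "1 \<le> i \<Longrightarrow> i < j \<Longrightarrow> j \<le> d \<Longrightarrow> (\<lambda>x. snd x i j) \<in> polyfun d"
| add: "p \<in> polyfun d \<Longrightarrow> q \<in> polyfun d \<Longrightarrow> (\<lambda>x. p x + q x) \<in> polyfun d"
| mult: "p \<in> polyfun d \<Longrightarrow> q \<in> polyfun d \<Longrightarrow> (\<lambda>x. p x * q x) \<in> polyfun d"

text \<open>A rational function on V is represented by a pair (P, Q) of polynomial
  functions with Q not identically zero; two representatives define the same
  rational function iff P Q' = P' Q on V.\<close>
type_synonym ratfn = "(pt \<Rightarrow> complex) \<times> (pt \<Rightarrow> complex)"

definition is_ratfun :: "nat \<Rightarrow> ratfn \<Rightarrow> bool" where
  "is_ratfun d F \<longleftrightarrow> fst F \<in> polyfun d \<and> snd F \<in> polyfun d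
                      \<and> (\<exists>x\<in>Vsp d. snd F x \<noteq> 0)"

definition rat_eq :: "nat \<Rightarrow> ratfn \<Rightarrow> ratfn \<Rightarrow> bool" where
  "rat_eq d F G \<longleftrightarrow> (\<forall>x\<in>Vsp d. fst F x * snd G x = fst G x * snd F x)"

definition rat_dom :: "nat \<Rightarrow> ratfn \<Rightarrow> pt set" where
  "rat_dom d F = {x\<in>Vsp d. \<exists>G. is_ratfun d G \<and> rat_eq d F G \<and> snd G x \<noteq> 0}"

definition rat_val :: "nat \<Rightarrow> ratfn \<Rightarrow> pt \<Rightarrow> complex" where
  "rat_val d F x = (SOME y. \<exists>G. is_ratfun d G \<and> rat_eq d F G \<and> snd G x \<noteq> 0
                                \<and> y = fst G x / snd G x)"

definition O_invariant :: "nat \<Rightarrow> ratfn \<Rightarrow> bool" where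
  "O_invariant d F \<longleftrightarrow>
     (\<forall>A\<in>Od d. rat_eq d (fst F \<circ> act d A, snd F \<circ> act d A) F)"

definition restricts_to :: "nat \<Rightarrow> ratfn \<Rightarrow> pt set \<Rightarrow> (pt \<Rightarrow> complex) \<Rightarrow> bool" where
  "restricts_to d F L g \<longleftrightarrow>
     (\<exists>G. is_ratfun d G \<and> rat_eq d F G \<and> (\<exists>x\<in>L. snd G x \<noteq> 0)
          \<and> (\<forall>x\<in>L. fst G x = g x * snd G x))"

fun Lsub :: "nat \<Rightarrow> nat \<Rightarrow> pt set" where
  "Lsub d 0 = Vsp d"
| "Lsub d (Suc 0) = {x\<in>Vsp d. \<forall>i\<in>{1..d-1}. fst x i = 0}"
| "Lsub d (Suc (Suc n)) =
     {x\<in>Lsub d (Suc n). \<forall>k\<in>{1..d - (n+2)}. snd x k (d - (n+2) + 2) = 0}"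

text \<open>Target restrictions: for 2 <= i <= d, f_i restricted to L^(i-1) is
  c_{1(d-i+2)}^2 + ... + c_{(d-i+1)(d-i+2)}^2 (for i = d this is c_12^2).\<close>
definition gtarget :: "nat \<Rightarrow> nat \<Rightarrow> pt \<Rightarrow> complex" where
  "gtarget d i x = (if i = d then (snd x 1 2)\<^sup>2
                    else (\<Sum>k=1..d-i+1. (snd x k (d-i+2))\<^sup>2))"

definition f1poly :: "nat \<Rightarrow> pt \<Rightarrow> complex" where
  "f1poly d x = (\<Sum>i=1..d. (fst x i)\<^sup>2)"

definition Ud :: "nat \<Rightarrow> (nat \<Rightarrow> ratfn) \<Rightarrow> pt set" where
  "Ud d f = {x\<in>Vsp d. (\<forall>k\<in>{1..d}. x \<in> rat_dom d (f k))
                      \<and> (\<Prod>k=1..d. rat_val d (f k) x) \<noteq> 0}"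

end

theory Submission
  imports Defs "Jordan_Normal_Form.Determinant"
begin

lemma sum_shift1: "(\<Sum>k=1..d. f k) = (\<Sum>k<d. f (Suc k)) " for f :: "nat \<Rightarrow> complex"
  by (induction d) auto

lemma Od_trans:
  assumes "A \<in> Od d" "i \<in> {1..d}" "j \<in> {1..d}"
  shows "(\<Sum>k=1..d. A k i * A k j) = (if i = j then 1 else 0)"
proof -
  define M where "M = mat d d (\<lambda>(i,j). A (Suc i) (Suc j))"
  have MC: "M \<in> carrier_mat d d" "transpose_mat M \<in> carrier_mat d d" unfolding M_def by auto
  have "M * transpose_mat M = 1\<^sub>m d"
  proof (rule eq_matI)
    fix a b assume ab: "a < dim_row (1\<^sub>m d)" "b < dim_col (1\<^sub>m d)"
    have "(M * transpose_mat M) $$ (a,b) = (\<Sum>k<d. A (Suc a) (Suc k) * A (Suc b) (Suc k))"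
      using ab unfolding M_def by (auto simp: scalar_prod_def intro!: sum.cong)
    also have "\<dots> = (\<Sum>k=1..d. A (Suc a) k * A (Suc b) k)" by (simp only: sum_shift1)
    also have "\<dots> = (if Suc a = Suc b then 1 else 0)" using assms(1) ab unfolding Od_def by auto
    finally show "(M * transpose_mat M) $$ (a,b) = 1\<^sub>m d $$ (a,b)" using ab by auto
  qed (auto simp: M_def)
  from mat_mult_left_right_inverse[OF MC this]
  have E: "transpose_mat M * M = 1\<^sub>m d" .
  obtain a b where a: "i = Suc a" "a < d" and b: "j = Suc b" "b < d" using assms(2,3)
    by (metis atLeastAtMost_iff Suc_le_eq not0_implies_Suc not_one_le_zero)
  have "(transpose_mat M * M) $$ (a,b) = (\<Sum>k<d. A (Suc k) (Suc a) * A (Suc k) (Suc b))"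
      using a b unfolding M_def by (auto simp: scalar_prod_def intro!: sum.cong)
  also have "\<dots> = (\<Sum>k=1..d. A k i * A k j)" using a b by (simp only: sum_shift1)
  finally show ?thesis using E a b by auto
qed

definition mmul :: "nat \<Rightarrow> (nat \<Rightarrow> nat \<Rightarrow> complex) \<Rightarrow> (nat \<Rightarrow> nat \<Rightarrow> complex) \<Rightarrow> (nat \<Rightarrow> nat \<Rightarrow> complex)" where
  "mmul d A B = (\<lambda>i j. \<Sum>k=1..d. A i k * B k j)"
definition trm :: "(nat \<Rightarrow> nat \<Rightarrow> complex) \<Rightarrow> (nat \<Rightarrow> nat \<Rightarrow> complex)" where
  "trm A = (\<lambda>i j. A j i)"
definition zout :: "nat \<Rightarrow> (nat \<Rightarrow> nat \<Rightarrow> complex) \<Rightarrow> bool" where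
  "zout d A \<longleftrightarrow> (\<forall>i j. (i \<notin> {1..d} \<or> j \<notin> {1..d}) \<longrightarrow> A i j = 0)"

lemma Od_zout: "A \<in> Od d \<Longrightarrow> zout d A" by (simp add: Od_def zout_def)

lemma act_comp: "act d B (act d A x) = act d (mmul d B A) x"
proof -
  have 1: "(\<Sum>j=1..d. B i j * (\<Sum>k=1..d. A j k * fst x k)) = (\<Sum>k=1..d. (\<Sum>j=1..d. B i j * A j k) * fst x k)" for i
  proof -
    have "(\<Sum>j=1..d. B i j * (\<Sum>k=1..d. A j k * fst x k)) = (\<Sum>j=1..d. \<Sum>k=1..d. B i j * A j k * fst x k)"
      by (simp add: sum_distrib_left mult_ac)
    also have "\<dots> = (\<Sum>k=1..d. \<Sum>j=1..d. B i j * A j k * fst x k)" by (rule sum.swap)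
    also have "\<dots> = (\<Sum>k=1..d. (\<Sum>j=1..d. B i j * A j k) * fst x k)" by (simp add: sum_distrib_right)
    finally show ?thesis .
  qed
  have 2: "(\<Sum>j=1..d. \<Sum>k=1..d. B i j * (\<Sum>a=1..d. \<Sum>b=1..d. A j a * snd x a b * A k b) * B l k)
     = (\<Sum>a=1..d. \<Sum>b=1..d. (\<Sum>j=1..d. B i j * A j a) * snd x a b * (\<Sum>k=1..d. B l k * A k b))" for i l
  proof -
    have "(\<Sum>j=1..d. \<Sum>k=1..d. B i j * (\<Sum>a=1..d. \<Sum>b=1..d. A j a * snd x a b * A k b) * B l k)
       = (\<Sum>j=1..d. \<Sum>k=1..d. \<Sum>a=1..d. \<Sum>b=1..d. B i j * A j a * snd x a b * A k b * B l k)"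
      by (simp add: sum_distrib_left sum_distrib_right mult_ac)
    also have "\<dots> = (\<Sum>j=1..d. \<Sum>a=1..d. \<Sum>k=1..d. \<Sum>b=1..d. B i j * A j a * snd x a b * A k b * B l k)"
      by (rule sum.cong[OF refl], rule sum.swap)
    also have "\<dots> = (\<Sum>a=1..d. \<Sum>j=1..d. \<Sum>k=1..d. \<Sum>b=1..d. B i j * A j a * snd x a b * A k b * B l k)"
      by (rule sum.swap)
    also have "\<dots> = (\<Sum>a=1..d. \<Sum>j=1..d. \<Sum>b=1..d. \<Sum>k=1..d. B i j * A j a * snd x a b * A k b * B l k)"
      by (rule sum.cong[OF refl], rule sum.cong[OF refl], rule sum.swap)
    also have "\<dots> = (\<Sum>a=1..d. \<Sum>b=1..d. \<Sum>j=1..d. \<Sum>k=1..d. B i j * A j a * snd x a b * A k b * B l k)"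
      by (rule sum.cong[OF refl], rule sum.swap)
    also have "\<dots> = (\<Sum>a=1..d. \<Sum>b=1..d. (\<Sum>j=1..d. B i j * A j a) * snd x a b * (\<Sum>k=1..d. B l k * A k b))"
      by (simp add: sum_distrib_left sum_distrib_right mult_ac)
    finally show ?thesis .
  qed
  show ?thesis unfolding act_def mmul_def using 1 2 by simp
qed

lemma mmul_assoc: "mmul d (mmul d A B) C = mmul d A (mmul d B C)"
proof (rule ext, rule ext)
  fix i j
  have "mmul d (mmul d A B) C i j = (\<Sum>k=1..d. \<Sum>n=1..d. A i n * B n k * C k j)"
    unfolding mmul_def by (simp add: sum_distrib_right)
  also have "\<dots> = (\<Sum>n=1..d. \<Sum>k=1..d. A i n * B n k * C k j)" by (rule sum.swap)
  also have "\<dots> = mmul d A (mmul d B C) i j"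
    unfolding mmul_def by (simp add: sum_distrib_left mult_ac)
  finally show "mmul d (mmul d A B) C i j = mmul d A (mmul d B C) i j" .
qed

lemma if01: "(if P then 1 else 0) * (x::complex) = (if P then x else 0)"
  "x * (if P then 1 else 0) = (if P then x else 0)" by auto

lemma sum_delta1: "i \<in> {1..(d::nat)} \<Longrightarrow> (\<Sum>k=1..d. (if i = k then 1 else 0) * (f k::complex)) = f i"
  by (simp only: if01, subst sum.delta', auto)

lemma mmul_idm_left: "zout d X \<Longrightarrow> mmul d (idm d) X = X"
  unfolding mmul_def idm_def zout_def
  by (rule ext, rule ext, case_tac "i \<in> {1..d}", auto simp: if01)

lemma mmul_idm_right: "zout d X \<Longrightarrow> mmul d X (idm d) = X"
  unfolding mmul_def idm_def zout_def
  by (rule ext, rule ext, case_tac "j \<in> {1..d}", auto simp: if01)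

lemma Vsp_mem: "x \<in> Vsp d \<longleftrightarrow> (\<forall>i. i \<notin> {1..d} \<longrightarrow> fst x i = 0) \<and> (\<forall>i j. snd x i j = - snd x j i)
  \<and> (\<forall>i j. (i \<notin> {1..d} \<or> j \<notin> {1..d}) \<longrightarrow> snd x i j = 0)"
  unfolding Vsp_def by (cases x, simp only: mem_Collect_eq case_prod_conv fst_conv snd_conv)
lemma Vsp_fst: "x \<in> Vsp d \<Longrightarrow> i \<notin> {1..d} \<Longrightarrow> fst x i = 0"
  unfolding Vsp_mem by blast
lemma Vsp_snd: "x \<in> Vsp d \<Longrightarrow> (i \<notin> {1..d} \<or> j \<notin> {1..d}) \<Longrightarrow> snd x i j = 0"
  unfolding Vsp_mem by blast
lemma Vsp_skew: "x \<in> Vsp d \<Longrightarrow> snd x i j = - snd x j i"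
  unfolding Vsp_mem by blast
lemma VspI: "(\<forall>i. i \<notin> {1..d} \<longrightarrow> fst x i = 0) \<Longrightarrow> (\<forall>i j. snd x i j = - snd x j i)
  \<Longrightarrow> (\<forall>i j. (i \<notin> {1..d} \<or> j \<notin> {1..d}) \<longrightarrow> snd x i j = 0) \<Longrightarrow> x \<in> Vsp d"
  unfolding Vsp_mem by blast
lemma Vsp_diag: "x \<in> Vsp d \<Longrightarrow> snd x i i = 0"
  using Vsp_skew[of x d i i] by simp

lemma act_id: assumes "x \<in> Vsp d" shows "act d (idm d) x = x"
proof -
  have 1: "(\<Sum>j=1..d. idm d i j * fst x j) = fst x i" for i
  proof (cases "i \<in> {1..d}")
    case True thus ?thesis unfolding idm_def using sum_delta1[OF True, of "fst x"] by simp
  next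
    case False
    hence "\<forall>j. idm d i j = 0" by (auto simp: idm_def)
    thus ?thesis using Vsp_fst[OF assms False] by simp
  qed
  have 2: "(\<Sum>j=1..d. \<Sum>k=1..d. idm d i j * snd x j k * idm d l k) = snd x i l" for i l
  proof (cases "i \<in> {1..d} \<and> l \<in> {1..d}")
    case True
    have "(\<Sum>j=1..d. \<Sum>k=1..d. idm d i j * snd x j k * idm d l k) = (\<Sum>j=1..d. (if i = j then 1 else 0) * (\<Sum>k=1..d. (if l = k then 1 else 0) * snd x j k))"
      unfolding idm_def using True by (auto simp: sum_distrib_left mult_ac intro!: sum.cong)
    also have "\<dots> = snd x i l" using True by (simp only: sum_delta1)
    finally show ?thesis .
  next
    case False thus ?thesis unfolding idm_def using Vsp_snd[OF assms, of i l] by auto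
  qed
  show ?thesis unfolding act_def using 1 2 by (simp add: prod_eq_iff)
qed

lemma act_Vsp: assumes "zout d A" "x \<in> Vsp d" shows "act d A x \<in> Vsp d"
proof -
  have sk: "(\<Sum>j=1..d. \<Sum>k=1..d. A i j * snd x j k * A l k) = - (\<Sum>j=1..d. \<Sum>k=1..d. A l j * snd x j k * A i k)" for i l
  proof -
    have "(\<Sum>j=1..d. \<Sum>k=1..d. A l j * snd x j k * A i k) = (\<Sum>k=1..d. \<Sum>j=1..d. A l j * snd x j k * A i k)"
      by (rule sum.swap)
    also have "\<dots> = (\<Sum>k=1..d. \<Sum>j=1..d. - (A i k * snd x k j * A l j))"
      using Vsp_skew[OF assms(2)] by (intro sum.cong refl) (metis mult.commute mult_minus_left mult_minus_right mult.assoc)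
    finally show ?thesis by (simp add: sum_negf)
  qed
  show ?thesis
  proof (rule VspI)
    show "\<forall>i. i \<notin> {1..d} \<longrightarrow> fst (act d A x) i = 0" using assms(1) unfolding act_def zout_def by auto
    show "\<forall>i j. snd (act d A x) i j = - snd (act d A x) j i" unfolding act_def snd_conv by (intro allI, rule sk)
    show "\<forall>i j. (i \<notin> {1..d} \<or> j \<notin> {1..d}) \<longrightarrow> snd (act d A x) i j = 0"
      using assms(1) unfolding act_def zout_def by auto
  qed
qed

lemma Od_iff: "A \<in> Od d \<longleftrightarrow> zout d A \<and> mmul d A (trm A) = idm d"
proof
  assume A: "A \<in> Od d"
  show "zout d A \<and> mmul d A (trm A) = idm d"
  proof
    show z: "zout d A" using A by (rule Od_zout)
    show "mmul d A (trm A) = idm d"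
    proof (rule ext, rule ext)
      fix i j show "mmul d A (trm A) i j = idm d i j"
      proof (cases "i \<in> {1..d} \<and> j \<in> {1..d}")
        case True
        have "(\<Sum>k=1..d. A i k * A j k) = (if i = j then 1 else 0)" using A True unfolding Od_def by blast
        thus ?thesis using True unfolding mmul_def trm_def idm_def by simp
      next
        case False
        hence "\<forall>k. A i k * A j k = 0" using z unfolding zout_def by auto
        hence "(\<Sum>k=1..d. A i k * A j k) = 0" by (intro sum.neutral) blast
        thus ?thesis using False unfolding mmul_def trm_def idm_def by auto
      qed
    qed
  qed
next
  assume "zout d A \<and> mmul d A (trm A) = idm d"
  hence z: "zout d A" and m: "\<And>i j. mmul d A (trm A) i j = idm d i j" by auto
  show "A \<in> Od d" unfolding Od_def mem_Collect_eq
  proof (intro conjI ballI allI impI)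
    fix i j assume "i \<notin> {1..d} \<or> j \<notin> {1..d}" thus "A i j = 0" using z unfolding zout_def by blast
  next
    fix i j assume "i \<in> {1..d}" "j \<in> {1..d}"
    thus "(\<Sum>k=1..d. A i k * A j k) = (if i = j then 1 else 0)"
      using m[of i j] unfolding mmul_def trm_def idm_def by auto
  qed
qed

lemma zout_trm: "zout d A \<Longrightarrow> zout d (trm A)" by (auto simp: zout_def trm_def)
lemma zout_mmul: assumes "zout d A" "zout d B" shows "zout d (mmul d A B)"
  unfolding zout_def mmul_def
proof (intro allI impI)
  fix i j assume "i \<notin> {1..d} \<or> j \<notin> {1..d}"
  hence "\<forall>k. A i k * B k j = 0" using assms unfolding zout_def by auto
  thus "(\<Sum>k=1..d. A i k * B k j) = 0" by (intro sum.neutral) blast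
qed
lemma zout_idm: "zout d (idm d)" by (auto simp: zout_def idm_def)
lemma trm_mmul: "trm (mmul d A B) = mmul d (trm B) (trm A)"
  by (auto simp: trm_def mmul_def mult.commute intro!: ext)

lemma Od_inv2: "A \<in> Od d \<Longrightarrow> mmul d A (trm A) = idm d" by (simp add: Od_iff)

lemma Od_inv1: assumes "A \<in> Od d" shows "mmul d (trm A) A = idm d"
proof (rule ext, rule ext)
  fix i j
  show "mmul d (trm A) A i j = idm d i j"
  proof (cases "i \<in> {1..d} \<and> j \<in> {1..d}")
    case True
    have "(\<Sum>k=1..d. A k i * A k j) = (if i = j then 1 else 0)" using Od_trans[OF assms] True by blast
    thus ?thesis using True unfolding mmul_def trm_def idm_def by simp
  next
    case False
    hence "\<forall>k. A k i * A k j = 0" using Od_zout[OF assms] unfolding zout_def by auto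
    hence "(\<Sum>k=1..d. A k i * A k j) = 0" by (intro sum.neutral) blast
    thus ?thesis using False unfolding mmul_def trm_def idm_def by auto
  qed
qed

lemma trm_trm: "trm (trm A) = A" by (simp add: trm_def)

lemma Od_trm: "A \<in> Od d \<Longrightarrow> trm A \<in> Od d"
  unfolding Od_iff[of "trm A"] trm_trm using Od_inv1[of A d] Od_zout[of A d] zout_trm by blast

lemma Od_mmul: assumes "A \<in> Od d" "B \<in> Od d" shows "mmul d A B \<in> Od d"
proof -
  have zA: "zout d A" and zB: "zout d B" using assms Od_zout by auto
  have "mmul d (mmul d A B) (trm (mmul d A B)) = mmul d A (mmul d (mmul d B (trm B)) (trm A))"
    by (simp add: trm_mmul mmul_assoc)
  also have "\<dots> = idm d" using assms by (simp add: Od_inv2 mmul_idm_left zout_trm zA)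
  finally show ?thesis using zB by (simp add: Od_iff zout_mmul zA)
qed

lemma trm_idm: "trm (idm d) = idm d" by (auto simp: trm_def idm_def intro!: ext)

lemma idm_Od: "idm d \<in> Od d"
  unfolding Od_iff trm_idm using mmul_idm_left[OF zout_idm] zout_idm by blast

definition line :: "pt \<Rightarrow> pt \<Rightarrow> complex \<Rightarrow> pt" where
  "line a b t = (\<lambda>i. fst a i + t * (fst b i - fst a i), \<lambda>i j. snd a i j + t * (snd b i j - snd a i j))"

lemma line0: "line a b 0 = a" by (simp add: line_def)
lemma line1: "line a b 1 = b" by (simp add: line_def)

definition polyV :: "nat \<Rightarrow> (pt \<Rightarrow> complex) \<Rightarrow> bool" where
  "polyV d p \<longleftrightarrow> (\<exists>q\<in>polyfun d. \<forall>x\<in>Vsp d. p x = q x)"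

definition linecl :: "pt set \<Rightarrow> bool" where
  "linecl S \<longleftrightarrow> (\<forall>a\<in>S. \<forall>b\<in>S. \<forall>t. line a b t \<in> S)"

lemma polyfun_line: "p \<in> polyfun d \<Longrightarrow> \<exists>q. \<forall>t. p (line a b t) = poly q t"
proof (induction rule: polyfun.induct)
  case (const c) show ?case by (rule exI[of _ "[:c:]"]) simp
next
  case (coord_v i) show ?case
    by (rule exI[of _ "[:fst a i, fst b i - fst a i:]"]) (simp add: line_def)
next
  case (coord_M i j) show ?case
    by (rule exI[of _ "[:snd a i j, snd b i j - snd a i j:]"]) (simp add: line_def)
next
  case (add p q)
  then obtain P Q where "\<forall>t. p (line a b t) = poly P t" "\<forall>t. q (line a b t) = poly Q t" by blast
  thus ?case by (intro exI[of _ "P + Q"]) simp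
next
  case (mult p q)
  then obtain P Q where "\<forall>t. p (line a b t) = poly P t" "\<forall>t. q (line a b t) = poly Q t" by blast
  thus ?case by (intro exI[of _ "P * Q"]) simp
qed

lemma polyV_line:
  assumes "polyV d p" "S \<subseteq> Vsp d" "linecl S" "a \<in> S" "b \<in> S"
  shows "\<exists>q. \<forall>t. p (line a b t) = poly q t"
proof -
  obtain p0 where p0: "p0 \<in> polyfun d" "\<forall>x\<in>Vsp d. p x = p0 x" using assms(1) unfolding polyV_def by blast
  obtain q where q: "\<forall>t. p0 (line a b t) = poly q t" using polyfun_line[OF p0(1)] by blast
  have "line a b t \<in> Vsp d" for t using assms(2-5) unfolding linecl_def by blast
  thus ?thesis using p0(2) q by (intro exI[of _ q]) auto
qed

lemma poly_domain:
  assumes "S \<subseteq> Vsp d" "linecl S" "polyV d p" "polyV d q" "\<forall>x\<in>S. p x * q x = 0"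
    "y \<in> S" "q y \<noteq> 0" "z \<in> S"
  shows "p z = 0"
proof -
  obtain P where P: "\<forall>t. p (line y z t) = poly P t" using polyV_line[OF assms(3,1,2,6,8)] by blast
  obtain Q where Q: "\<forall>t. q (line y z t) = poly Q t" using polyV_line[OF assms(4,1,2,6,8)] by blast
  have "line y z t \<in> S" for t using assms(2,6,8) unfolding linecl_def by blast
  hence "poly (P * Q) t = 0" for t using assms(5) P Q by (metis poly_mult)
  hence PQ: "P * Q = 0" using poly_all_0_iff_0 by blast
  have "poly Q 0 \<noteq> 0" using Q assms(7) by (metis line0)
  hence "Q \<noteq> 0" by auto
  hence "P = 0" using PQ by simp
  thus ?thesis using P by (metis line1 poly_0)
qed

lemma polyfun_sum: "finite S \<Longrightarrow> (\<forall>k\<in>S. f k \<in> polyfun d) \<Longrightarrow> (\<lambda>x. \<Sum>k\<in>S. f k x) \<in> polyfun d"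
proof (induction S rule: finite_induct)
  case empty show ?case using polyfun.const[of 0 d] by simp
next
  case (insert a S)
  have "(\<lambda>x. f a x + (\<Sum>k\<in>S. f k x)) \<in> polyfun d"
    using insert by (intro polyfun.add) auto
  thus ?case using insert by simp
qed

lemma polyV_polyfun: "p \<in> polyfun d \<Longrightarrow> polyV d p" unfolding polyV_def by blast
lemma polyV_const: "polyV d (\<lambda>x. c)" by (rule polyV_polyfun, rule polyfun.const)
lemma polyV_add: "polyV d p \<Longrightarrow> polyV d q \<Longrightarrow> polyV d (\<lambda>x. p x + q x)"
  unfolding polyV_def by (metis (no_types, lifting) polyfun.add)
lemma polyV_mult: "polyV d p \<Longrightarrow> polyV d q \<Longrightarrow> polyV d (\<lambda>x. p x * q x)"
  unfolding polyV_def by (metis (no_types, lifting) polyfun.mult)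
lemma polyV_diff: "polyV d p \<Longrightarrow> polyV d q \<Longrightarrow> polyV d (\<lambda>x. p x - q x)"
proof -
  assume "polyV d p" "polyV d q"
  hence "polyV d (\<lambda>x. p x + (-1) * q x)" by (intro polyV_add polyV_mult polyV_const)
  thus ?thesis by simp
qed
lemma polyV_sum: "finite S \<Longrightarrow> (\<forall>k\<in>S. polyV d (f k)) \<Longrightarrow> polyV d (\<lambda>x. \<Sum>k\<in>S. f k x)"
proof (induction S rule: finite_induct)
  case empty show ?case using polyV_const[of d 0] by simp
next
  case (insert a S)
  have "polyV d (\<lambda>x. f a x + (\<Sum>k\<in>S. f k x))"
    using insert by (intro polyV_add) auto
  thus ?case using insert by simp
qed
lemma polyV_sq: "polyV d p \<Longrightarrow> polyV d (\<lambda>x. (p x)\<^sup>2)"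
  using polyV_mult[of d p p] by (simp add: power2_eq_square)
lemma polyV_coordM: "1 \<le> i \<Longrightarrow> i < j \<Longrightarrow> j \<le> d \<Longrightarrow> polyV d (\<lambda>x. snd x i j)"
  by (rule polyV_polyfun, rule polyfun.coord_M)
lemma polyV_coordv: "i \<in> {1..d} \<Longrightarrow> polyV d (\<lambda>x. fst x i)"
  by (rule polyV_polyfun, rule polyfun.coord_v)

definition cM :: "nat \<Rightarrow> nat \<Rightarrow> pt \<Rightarrow> complex" where
  "cM a b y = (if a < b then snd y a b else if b < a then - snd y b a else 0)"

lemma cM_poly: assumes "a \<in> {1..d}" "b \<in> {1..d}" shows "cM a b \<in> polyfun d"
proof -
  consider "a < b" | "b < a" | "a = b" by linarith
  thus ?thesis
  proof cases
    case 1
    have "(\<lambda>y. snd y a b) \<in> polyfun d" using assms 1 by (intro polyfun.coord_M) auto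
    thus ?thesis using 1 unfolding cM_def by simp
  next
    case 2
    have "(\<lambda>y. (-1) * snd y b a) \<in> polyfun d" using assms 2 by (intro polyfun.mult polyfun.const polyfun.coord_M) auto
    thus ?thesis using 2 unfolding cM_def by simp
  next
    case 3
    thus ?thesis unfolding cM_def using polyfun.const[of 0 d] by simp
  qed
qed

lemma cM_Vsp: "y \<in> Vsp d \<Longrightarrow> cM a b y = snd y a b"
  unfolding cM_def using Vsp_skew[of y d a b] Vsp_diag[of y d a] by auto

lemma polyfun_act: "p \<in> polyfun d \<Longrightarrow> \<exists>q\<in>polyfun d. \<forall>y\<in>Vsp d. q y = p (act d A y)"
proof (induction rule: polyfun.induct)
  case (const c) show ?case using polyfun.const[of c d] by (intro bexI[of _ "\<lambda>x. c"]) auto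
next
  case (coord_v i)
  have "(\<lambda>y. \<Sum>j\<in>{1..d}. A i j * fst y j) \<in> polyfun d"
  proof (rule polyfun_sum, simp, rule ballI)
    fix j assume "j \<in> {1..d}"
    thus "(\<lambda>y. A i j * fst y j) \<in> polyfun d" by (rule polyfun.mult[OF polyfun.const polyfun.coord_v])
  qed
  thus ?case unfolding act_def by (intro bexI[of _ "\<lambda>y. \<Sum>j\<in>{1..d}. A i j * fst y j"]) simp_all
next
  case (coord_M i j)
  have "(\<lambda>y. \<Sum>a\<in>{1..d}. \<Sum>b\<in>{1..d}. A i a * cM a b y * A j b) \<in> polyfun d"
  proof (rule polyfun_sum, simp, rule ballI)
    fix a assume a: "a \<in> {1..d}"
    show "(\<lambda>y. \<Sum>b\<in>{1..d}. A i a * cM a b y * A j b) \<in> polyfun d"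
    proof (rule polyfun_sum, simp, rule ballI)
      fix b assume b: "b \<in> {1..d}"
      have "cM a b \<in> polyfun d" using cM_poly[OF a b] .
      hence "(\<lambda>y. cM a b y) \<in> polyfun d" by simp
      thus "(\<lambda>y. A i a * cM a b y * A j b) \<in> polyfun d"
        by (rule polyfun.mult[OF polyfun.mult[OF polyfun.const] polyfun.const])
    qed
  qed
  moreover have "\<forall>y\<in>Vsp d. (\<Sum>a\<in>{1..d}. \<Sum>b\<in>{1..d}. A i a * cM a b y * A j b) = snd (act d A y) i j"
  proof
    fix y assume y: "y \<in> Vsp d"
    have "\<And>a b. cM a b y = snd y a b" using cM_Vsp[OF y] .
    thus "(\<Sum>a\<in>{1..d}. \<Sum>b\<in>{1..d}. A i a * cM a b y * A j b) = snd (act d A y) i j"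
      unfolding act_def snd_conv by simp
  qed
  ultimately show ?case by (intro bexI[of _ "\<lambda>y. \<Sum>a\<in>{1..d}. \<Sum>b\<in>{1..d}. A i a * cM a b y * A j b"]) simp_all
next
  case (add p q)
  then obtain P Q where "P \<in> polyfun d" "\<forall>y\<in>Vsp d. P y = p (act d A y)" "Q \<in> polyfun d" "\<forall>y\<in>Vsp d. Q y = q (act d A y)" by blast
  thus ?case by (intro bexI[of _ "\<lambda>y. P y + Q y"] polyfun.add) auto
next
  case (mult p q)
  then obtain P Q where "P \<in> polyfun d" "\<forall>y\<in>Vsp d. P y = p (act d A y)" "Q \<in> polyfun d" "\<forall>y\<in>Vsp d. Q y = q (act d A y)" by blast
  thus ?case by (intro bexI[of _ "\<lambda>y. P y * Q y"] polyfun.mult) auto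
qed

lemma polyV_act: assumes "polyV d p" "zout d A" shows "polyV d (\<lambda>y. p (act d A y))"
proof -
  obtain p0 where p0: "p0 \<in> polyfun d" "\<forall>x\<in>Vsp d. p x = p0 x" using assms(1) unfolding polyV_def by blast
  obtain q where q: "q \<in> polyfun d" "\<forall>y\<in>Vsp d. q y = p0 (act d A y)" using polyfun_act[OF p0(1)] by blast
  show ?thesis unfolding polyV_def
    using q p0(2) act_Vsp[OF assms(2)] by (intro bexI[of _ q]) auto
qed

lemma linecl_Vsp: "linecl (Vsp d)"
  unfolding linecl_def
proof (intro ballI allI)
  fix a b t assume a: "a \<in> Vsp d" and b: "b \<in> Vsp d"
  show "line a b t \<in> Vsp d"
  proof (rule VspI)
    show "\<forall>i. i \<notin> {1..d} \<longrightarrow> fst (line a b t) i = 0" using Vsp_fst[OF a] Vsp_fst[OF b] by (simp add: line_def)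
    show "\<forall>i j. snd (line a b t) i j = - snd (line a b t) j i"
    proof (intro allI)
      fix i j
      have ha: "snd a i j = - snd a j i" and hb: "snd b i j = - snd b j i" using Vsp_skew a b by blast+
      show "snd (line a b t) i j = - snd (line a b t) j i" unfolding line_def snd_conv ha hb
        by (simp add: algebra_simps)
    qed
    show "\<forall>i j. (i \<notin> {1..d} \<or> j \<notin> {1..d}) \<longrightarrow> snd (line a b t) i j = 0"
      using Vsp_snd[OF a] Vsp_snd[OF b] by (simp add: line_def)
  qed
qed

definition rfV :: "nat \<Rightarrow> ratfn \<Rightarrow> bool" where
  "rfV d F \<longleftrightarrow> polyV d (fst F) \<and> polyV d (snd F) \<and> (\<exists>x\<in>Vsp d. snd F x \<noteq> 0)"

lemma ratfun_rfV: "is_ratfun d F \<Longrightarrow> rfV d F"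
  unfolding is_ratfun_def rfV_def using polyV_polyfun by blast

lemma rat_sym: "rat_eq d F G \<Longrightarrow> rat_eq d G F"
  unfolding rat_eq_def by (metis mult.commute)

lemma rat_trans:
  assumes F: "rfV d F" and G: "rfV d G" and H: "rfV d H"
    and FG: "rat_eq d F G" and GH: "rat_eq d G H"
  shows "rat_eq d F H"
proof -
  obtain y where y: "y \<in> Vsp d" "snd G y \<noteq> 0" using G unfolding rfV_def by blast
  have z: "\<forall>x\<in>Vsp d. (fst F x * snd H x - fst H x * snd F x) * snd G x = 0"
  proof
    fix x assume x: "x \<in> Vsp d"
    have 1: "fst F x * snd G x = fst G x * snd F x" and 2: "fst G x * snd H x = fst H x * snd G x"
      using FG GH x unfolding rat_eq_def by auto
    have "(fst F x * snd H x - fst H x * snd F x) * snd G x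
       = (fst F x * snd G x) * snd H x - (fst H x * snd G x) * snd F x" by (simp add: algebra_simps)
    also have "\<dots> = (fst G x * snd F x) * snd H x - (fst G x * snd H x) * snd F x" by (simp only: 1 2)
    also have "\<dots> = 0" by (simp add: algebra_simps)
    finally show "(fst F x * snd H x - fst H x * snd F x) * snd G x = 0" .
  qed
  have pv: "polyV d (\<lambda>x. fst F x * snd H x - fst H x * snd F x)"
    using F H unfolding rfV_def by (intro polyV_diff polyV_mult) auto
  have "fst F x * snd H x - fst H x * snd F x = 0" if "x \<in> Vsp d" for x
    using poly_domain[OF order_refl linecl_Vsp pv _ z y that] G unfolding rfV_def by blast
  thus ?thesis unfolding rat_eq_def by auto
qed

lemma rat_val_eq:
  assumes F: "rfV d F" and G: "is_ratfun d G" and FG: "rat_eq d F G" and x: "x \<in> Vsp d" and nz: "snd G x \<noteq> 0"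
  shows "rat_val d F x = fst G x / snd G x"
proof -
  let ?P = "\<lambda>y. \<exists>G. is_ratfun d G \<and> rat_eq d F G \<and> snd G x \<noteq> 0 \<and> y = fst G x / snd G x"
  have "?P (fst G x / snd G x)" using G FG nz by blast
  hence "?P (rat_val d F x)" unfolding rat_val_def by (rule someI)
  then obtain G0 where G0: "is_ratfun d G0" "rat_eq d F G0" "snd G0 x \<noteq> 0" "rat_val d F x = fst G0 x / snd G0 x"
    by blast
  have "rat_eq d G0 G" using rat_trans[OF ratfun_rfV[OF G0(1)] F ratfun_rfV[OF G] rat_sym[OF G0(2)] FG] .
  hence "fst G0 x * snd G x = fst G x * snd G0 x" using x unfolding rat_eq_def by blast
  thus ?thesis using G0(3,4) nz by (simp add: frac_eq_eq)
qed

lemma restrict_val: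
  assumes R: "restricts_to d F L g" and F: "is_ratfun d F" and L: "L \<subseteq> Vsp d" "linecl L"
    and g: "polyV d g" and x: "x \<in> L" "x \<in> rat_dom d F"
  shows "rat_val d F x = g x"
proof -
  obtain G1 y1 where G1: "is_ratfun d G1" "rat_eq d F G1" "y1 \<in> L" "snd G1 y1 \<noteq> 0"
    "\<forall>z\<in>L. fst G1 z = g z * snd G1 z" using R unfolding restricts_to_def by blast
  obtain G where G: "is_ratfun d G" "rat_eq d F G" "snd G x \<noteq> 0" using x(2) unfolding rat_dom_def by blast
  have xV: "x \<in> Vsp d" using x L by blast
  have v: "rat_val d F x = fst G x / snd G x" using rat_val_eq[OF ratfun_rfV[OF F] G(1,2) xV G(3)] .
  have GG1: "rat_eq d G G1" using rat_trans[OF ratfun_rfV[OF G(1)] ratfun_rfV[OF F] ratfun_rfV[OF G1(1)] rat_sym[OF G(2)] G1(2)] .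
  have z: "\<forall>z\<in>L. (fst G z - g z * snd G z) * snd G1 z = 0"
  proof
    fix z assume z: "z \<in> L"
    have "fst G z * snd G1 z = fst G1 z * snd G z" using GG1 z L unfolding rat_eq_def by blast
    also have "\<dots> = g z * snd G1 z * snd G z" using G1(5) z by simp
    finally show "(fst G z - g z * snd G z) * snd G1 z = 0" by (simp add: algebra_simps)
  qed
  have pv: "polyV d (\<lambda>z. fst G z - g z * snd G z)"
  proof -
    have "polyV d (fst G)" "polyV d (snd G)" using G(1) ratfun_rfV unfolding rfV_def by auto
    thus ?thesis using g by (intro polyV_diff polyV_mult) auto
  qed
  have "fst G x - g x * snd G x = 0"
    using poly_domain[OF L pv _ z G1(3) G1(4) x(1)] G1(1) unfolding is_ratfun_def using polyV_polyfun by blast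
  thus ?thesis using v G(3) by (simp add: field_simps)
qed

lemma act_inv: assumes "A \<in> Od d" "x \<in> Vsp d" shows "act d (trm A) (act d A x) = x"
  using act_comp[of d "trm A" A x] Od_inv1[OF assms(1)] act_id[OF assms(2)] by simp

lemma invariance:
  assumes F: "is_ratfun d F" and inv: "O_invariant d F" and x: "x \<in> rat_dom d F" and A: "A \<in> Od d"
  shows "act d A x \<in> rat_dom d F \<and> rat_val d F (act d A x) = rat_val d F x"
proof -
  obtain G where G: "is_ratfun d G" "rat_eq d F G" "snd G x \<noteq> 0" using x unfolding rat_dom_def by blast
  have xV: "x \<in> Vsp d" using x unfolding rat_dom_def by blast
  define B where "B = trm A"
  have B: "B \<in> Od d" using Od_trm[OF A] B_def by simp
  have zA: "zout d A" and zB: "zout d B" using A B Od_zout by auto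
  have BA: "act d B (act d A z) = z" if "z \<in> Vsp d" for z using act_inv[OF A that] B_def by simp
  obtain P' where P': "P' \<in> polyfun d" "\<forall>y\<in>Vsp d. P' y = fst G (act d B y)"
    using polyfun_act[of "fst G" d B] G(1) unfolding is_ratfun_def by metis
  obtain Q' where Q': "Q' \<in> polyfun d" "\<forall>y\<in>Vsp d. Q' y = snd G (act d B y)"
    using polyfun_act[of "snd G" d B] G(1) unfolding is_ratfun_def by metis
  define y1 where "y1 = act d A x"
  have y1V: "y1 \<in> Vsp d" using act_Vsp[OF zA xV] y1_def by simp
  have Q'y1: "Q' y1 = snd G x" and P'y1: "P' y1 = fst G x" using Q'(2) P'(2) y1V BA[OF xV] y1_def by auto
  have G': "is_ratfun d (P', Q')" unfolding is_ratfun_def using P'(1) Q'(1) y1V Q'y1 G(3) by (auto intro!: bexI[of _ y1])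
  define FB where "FB = (fst F \<circ> act d B, snd F \<circ> act d B)"
  have FBF: "rat_eq d FB F" using inv B unfolding O_invariant_def FB_def by blast
  have FrV: "rfV d F" using ratfun_rfV[OF F] .
  have FBrV: "rfV d FB"
  proof -
    obtain z0 where z0: "z0 \<in> Vsp d" "snd F z0 \<noteq> 0" using F unfolding is_ratfun_def by blast
    have "act d A z0 \<in> Vsp d" "snd FB (act d A z0) \<noteq> 0" using act_Vsp[OF zA z0(1)] BA[OF z0(1)] z0(2) unfolding FB_def by auto
    moreover have "polyV d (fst FB)" "polyV d (snd FB)" using FrV zB unfolding rfV_def FB_def comp_def
      by (auto intro: polyV_act)
    ultimately show ?thesis unfolding rfV_def by blast
  qed
  have FBG': "rat_eq d FB (P', Q')" unfolding rat_eq_def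
  proof
    fix y assume y: "y \<in> Vsp d"
    have "act d B y \<in> Vsp d" using act_Vsp[OF zB y] .
    hence "fst F (act d B y) * snd G (act d B y) = fst G (act d B y) * snd F (act d B y)"
      using G(2) unfolding rat_eq_def by blast
    thus "fst FB y * snd (P', Q') y = fst (P', Q') y * snd FB y" using P'(2) Q'(2) y unfolding FB_def by simp
  qed
  have FG': "rat_eq d F (P', Q')" using rat_trans[OF FrV FBrV ratfun_rfV[OF G'] rat_sym[OF FBF] FBG'] .
  have dom: "y1 \<in> rat_dom d F" unfolding rat_dom_def mem_Collect_eq using y1V G' FG' Q'y1 G(3)
    by (intro conjI exI[of _ "(P', Q')"]) auto
  have "rat_val d F y1 = P' y1 / Q' y1" using rat_val_eq[OF FrV G' FG' y1V] Q'y1 G(3) by simp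
  also have "\<dots> = rat_val d F x" using rat_val_eq[OF FrV G(1,2) xV G(3)] P'y1 Q'y1 by simp
  finally show ?thesis using dom y1_def by simp
qed

definition Lc :: "nat \<Rightarrow> nat \<Rightarrow> pt \<Rightarrow> bool" where
  "Lc d i x \<longleftrightarrow> (\<forall>k\<in>{1..d-1}. fst x k = 0) \<and> (\<forall>i'\<in>{2..i}. \<forall>k\<in>{1..d-i'}. snd x k (d-i'+2) = 0)"

lemma Lsub_char: "Lsub d (Suc n) = {x \<in> Vsp d. Lc d (Suc n) x}"
proof (induction n)
  case 0 show ?case by (auto simp: Lc_def)
next
  case (Suc n)
  have e: "{2..Suc (Suc n)} = insert (Suc (Suc n)) {2..Suc n}" by auto
  have "Lsub d (Suc (Suc n)) = {x \<in> Lsub d (Suc n). \<forall>k\<in>{1..d - (n+2)}. snd x k (d - (n+2) + 2) = 0}" by simp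
  also have "\<dots> = {x \<in> Vsp d. Lc d (Suc (Suc n)) x}"
    unfolding Suc Lc_def e by (auto simp: numeral_2_eq_2)
  finally show ?case .
qed

lemma Lsub_Vsp: "Lsub d (Suc n) \<subseteq> Vsp d" using Lsub_char by auto

lemma Lc_mono: "Lc d j x \<Longrightarrow> i \<le> j \<Longrightarrow> Lc d i x" unfolding Lc_def by auto

lemma Lsub_mono: "1 \<le> i \<Longrightarrow> i \<le> j \<Longrightarrow> Lsub d j \<subseteq> Lsub d i"
proof -
  assume "1 \<le> i" "i \<le> j"
  then obtain a b where "i = Suc a" "j = Suc b" by (metis Suc_le_D le_trans not0_implies_Suc not_one_le_zero)
  thus "Lsub d j \<subseteq> Lsub d i" using \<open>i \<le> j\<close> Lc_mono by (auto simp: Lsub_char)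
qed

lemma linecl_Lsub: "linecl (Lsub d (Suc n))"
  unfolding linecl_def
proof (intro ballI allI)
  fix a b t assume a: "a \<in> Lsub d (Suc n)" and b: "b \<in> Lsub d (Suc n)"
  have aV: "a \<in> Vsp d" and bV: "b \<in> Vsp d" and la: "Lc d (Suc n) a" and lb: "Lc d (Suc n) b"
    using a b by (auto simp: Lsub_char)
  have "line a b t \<in> Vsp d" using linecl_Vsp aV bV unfolding linecl_def by blast
  moreover have "Lc d (Suc n) (line a b t)" using la lb unfolding Lc_def line_def by auto
  ultimately show "line a b t \<in> Lsub d (Suc n)" by (simp add: Lsub_char)
qed

lemma gtarget_polyV: assumes "i \<in> {2..d}" shows "polyV d (gtarget d i)"
proof (cases "i = d")
  case True
  have "polyV d (\<lambda>x. (snd x 1 2)\<^sup>2)" using assms by (intro polyV_sq polyV_coordM) auto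
  thus ?thesis using True unfolding gtarget_def by simp
next
  case False
  have "polyV d (\<lambda>x. \<Sum>k=1..d-i+1. (snd x k (d-i+2))\<^sup>2)" using assms
    by (intro polyV_sum polyV_sq polyV_coordM ballI) auto
  thus ?thesis using False unfolding gtarget_def by simp
qed

lemma gtarget_L:
  assumes d: "d \<ge> 2" and i: "i \<in> {2..d}" and x: "x \<in> Lsub d (d-1)"
  shows "gtarget d i x = (snd x (d-i+1) (d-i+2))\<^sup>2"
proof (cases "i = d")
  case True
  have e: "d - i + 1 = 1" "d - i + 2 = 2" using True by auto
  show ?thesis unfolding gtarget_def e using True by simp
next
  case False
  have n: "d - 1 = Suc (d - 2)" using d by simp
  have Lc: "Lc d (d-1) x" using x Lsub_char[of d "d-2"] n by simp
  have z: "\<forall>k\<in>{1..d-i}. snd x k (d-i+2) = 0" using Lc False i unfolding Lc_def by auto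
  have e: "d - i + 1 = Suc (d - i)" by simp
  have "(\<Sum>k=1..d-i+1. (snd x k (d-i+2))\<^sup>2) = (\<Sum>k=1..d-i. (snd x k (d-i+2))\<^sup>2) + (snd x (d-i+1) (d-i+2))\<^sup>2"
    unfolding e by (simp add: sum.cl_ivl_Suc)
  also have "(\<Sum>k=1..d-i. (snd x k (d-i+2))\<^sup>2) = 0" using z by simp
  finally show ?thesis using False unfolding gtarget_def by simp
qed

lemma reflection:
  assumes m: "1 \<le> m" "m \<le> d" and g: "(\<Sum>k=1..m. (w k)\<^sup>2) \<noteq> (0::complex)"
  shows "\<exists>H\<in>Od d. (\<forall>z k. k \<in> {1..d} \<longrightarrow> m < k \<longrightarrow> (\<Sum>a=1..d. H k a * z a) = z k)
            \<and> (\<forall>z k. k \<in> {1..d} \<longrightarrow> (\<forall>a\<in>{1..m}. z a = 0) \<longrightarrow> (\<Sum>a=1..d. H k a * z a) = z k)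
            \<and> (\<forall>z k. k \<in> {1..m-1} \<longrightarrow> (\<forall>a\<in>{1..m}. z a = w a) \<longrightarrow> (\<Sum>a=1..d. H k a * z a) = 0)"
proof -
  define g where "g = (\<Sum>k=1..m. (w k)\<^sup>2)"
  have gnz: "g \<noteq> 0" using g g_def by simp
  obtain l where l2: "l\<^sup>2 = g" and lnz: "g - l * w m \<noteq> 0"
  proof (cases "g - csqrt g * w m = 0")
    case True
    have cw: "csqrt g * w m = g" using True by (simp add: right_minus_eq)
    have "(- csqrt g)\<^sup>2 = g" by simp
    moreover have "g - (- csqrt g) * w m \<noteq> 0" using cw gnz by simp
    ultimately show ?thesis using that by blast
  next
    case False thus ?thesis using that[of "csqrt g"] by simp
  qed
  define u where "u a = (if a \<in> {1..m} then w a - (if a = m then l else 0) else 0)" for a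
  define p where "p = (\<Sum>a=1..m. u a * w a)"
  define s where "s = (\<Sum>a=1..m. (u a)\<^sup>2)"
  have mm: "m \<in> {1..m}" using m by auto
  have p: "p = g - l * w m"
  proof -
    have "p = (\<Sum>a=1..m. (w a)\<^sup>2 - (if a = m then l * w a else 0))"
      unfolding p_def u_def by (intro sum.cong refl) (auto simp: power2_eq_square algebra_simps)
    also have "\<dots> = g - l * w m" unfolding g_def sum_subtractf using mm by simp
    finally show ?thesis .
  qed
  have s: "s = 2 * p"
  proof -
    have "s = (\<Sum>a=1..m. (w a)\<^sup>2 - 2 * (if a = m then l * w a else 0) + (if a = m then l\<^sup>2 else 0))"
      unfolding s_def u_def by (intro sum.cong refl) (auto simp: power2_eq_square algebra_simps)
    also have "\<dots> = g - 2 * (l * w m) + l\<^sup>2" unfolding g_def sum.distrib sum_subtractf sum_distrib_left[symmetric]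
      using mm by simp
    finally show ?thesis using p l2 by simp
  qed
  have pnz: "p \<noteq> 0" using p lnz by simp
  have snz: "s \<noteq> 0" using s pnz by simp
  define H where "H a b = (if a \<in> {1..d} \<and> b \<in> {1..d} then (if a = b then 1 else 0) - 2 * u a * u b / s else 0)" for a b
  have uz: "u a = 0" if "a \<notin> {1..m}" for a unfolding u_def using if_not_P[OF that] by metis
  have sumu: "(\<Sum>a=1..d. u a * z a) = (\<Sum>a=1..m. u a * z a)" for z
    by (rule sum.mono_neutral_right) (use m uz in auto)
  have Hz: "(\<Sum>a=1..d. H k a * z a) = z k - 2 * u k * (\<Sum>a=1..m. u a * z a) / s" if k: "k \<in> {1..d}" for k z
  proof -
    have "(\<Sum>a=1..d. H k a * z a) = (\<Sum>a=1..d. (if k = a then 1 else 0) * z a - (2 * u k / s) * (u a * z a))"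
      unfolding H_def using k by (intro sum.cong refl) (auto simp: algebra_simps)
    also have "\<dots> = z k - (2 * u k / s) * (\<Sum>a=1..d. u a * z a)"
      unfolding sum_subtractf sum_distrib_left[symmetric] using sum_delta1[OF k, of z] by simp
    finally show ?thesis unfolding sumu by simp
  qed
  have HOd: "H \<in> Od d" unfolding Od_def mem_Collect_eq
  proof (intro conjI allI impI ballI)
    fix i j assume "i \<notin> {1..d} \<or> j \<notin> {1..d}" thus "H i j = 0" unfolding H_def by auto
  next
    fix i j assume i: "i \<in> {1..d}" and j: "j \<in> {1..d}"
    have 1: "(\<Sum>k=1..m. u k * H j k) = - u j"
    proof -
      have "(\<Sum>k=1..m. u k * H j k) = (\<Sum>k=1..m. (if j = k then u k else 0) - (2 * u j / s) * (u k)\<^sup>2)"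
        unfolding H_def using j m by (intro sum.cong refl) (auto simp: algebra_simps power2_eq_square)
      also have "\<dots> = (if j \<in> {1..m} then u j else 0) - (2 * u j / s) * s"
        unfolding sum_subtractf sum_distrib_left[symmetric] s_def by simp
      also have "\<dots> = - u j" using uz[of j] snz by auto
      finally show ?thesis .
    qed
    have "(\<Sum>k=1..d. H i k * H j k) = H j i - 2 * u i * (\<Sum>k=1..m. u k * H j k) / s" using Hz[OF i, of "H j"] .
    also have "\<dots> = H j i + 2 * u i * u j / s" unfolding 1 by simp
    also have "\<dots> = (if i = j then 1 else 0)" unfolding H_def using i j snz by (auto simp: field_simps)
    finally show "(\<Sum>k=1..d. H i k * H j k) = (if i = j then 1 else 0)" .
  qed
  show ?thesis
  proof (intro bexI[OF _ HOd] conjI allI impI)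
    fix z :: "nat \<Rightarrow> complex" and k :: nat assume k: "k \<in> {1..d}" "m < k"
    thus "(\<Sum>a=1..d. H k a * z a) = z k" using Hz[OF k(1)] uz[of k] by simp
  next
    fix z :: "nat \<Rightarrow> complex" and k :: nat assume k: "k \<in> {1..d}" and z: "\<forall>a\<in>{1..m}. z a = 0"
    thus "(\<Sum>a=1..d. H k a * z a) = z k" using Hz[OF k] by simp
  next
    fix z :: "nat \<Rightarrow> complex" and k :: nat assume k: "k \<in> {1..m-1}" and z: "\<forall>a\<in>{1..m}. z a = w a"
    have kd: "k \<in> {1..d}" using k m by auto
    have "(\<Sum>a=1..m. u a * z a) = p" unfolding p_def using z by simp
    moreover have "z k = w k" "u k = w k" using z k unfolding u_def by auto
    ultimately have "(\<Sum>a=1..d. H k a * z a) = w k - 2 * w k * p / (2 * p)" using Hz[OF kd, of z] s by simp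
    thus "(\<Sum>a=1..d. H k a * z a) = 0" using pnz by simp
  qed
qed

lemma act_snd_col:
  assumes P1: "\<forall>z k. k \<in> {1..d} \<longrightarrow> m < k \<longrightarrow> (\<Sum>a=1..d. H k a * z a) = z k"
    and j: "j \<in> {1..d}" "m < j"
  shows "snd (act d H y) k j = (\<Sum>a=1..d. H k a * snd y a j)"
proof -
  have "snd (act d H y) k j = (\<Sum>a=1..d. H k a * (\<Sum>b=1..d. H j b * snd y a b))"
    unfolding act_def snd_conv by (simp add: sum_distrib_left mult_ac)
  also have "\<dots> = (\<Sum>a=1..d. H k a * snd y a j)"
    using P1 j by simp
  finally show ?thesis .
qed

lemma base_L:
  assumes x: "x \<in> Vsp d" and H: "H \<in> Od d" and d: "d \<ge> 2"
    and P2: "\<forall>z k. k \<in> {1..d-1} \<longrightarrow> (\<forall>a\<in>{1..d}. z a = fst x a) \<longrightarrow> (\<Sum>a=1..d. H k a * z a) = 0"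
  shows "act d H x \<in> Lsub d 1"
proof -
  have V: "act d H x \<in> Vsp d" using act_Vsp[OF Od_zout[OF H] x] .
  have "\<forall>k\<in>{1..d-1}. fst (act d H x) k = 0" unfolding act_def fst_conv using P2 by blast
  thus ?thesis using V by simp
qed

lemma step_L:
  assumes y: "y \<in> Lsub d (Suc n)" and H: "H \<in> Od d" and nd: "Suc (Suc n) \<le> d - 1"
    and P1: "\<forall>z k. k \<in> {1..d} \<longrightarrow> (d - Suc n) < k \<longrightarrow> (\<Sum>a=1..d. H k a * z a) = z k"
    and P1b: "\<forall>z k. k \<in> {1..d} \<longrightarrow> (\<forall>a\<in>{1..d - Suc n}. z a = 0) \<longrightarrow> (\<Sum>a=1..d. H k a * z a) = z k"
    and P2: "\<forall>z k. k \<in> {1..(d - Suc n) - 1} \<longrightarrow> (\<forall>a\<in>{1..d - Suc n}. z a = snd y a (d - Suc n + 1)) \<longrightarrow> (\<Sum>a=1..d. H k a * z a) = 0"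
  shows "act d H y \<in> Lsub d (Suc (Suc n))"
proof -
  define m where "m = d - Suc n"
  have yV: "y \<in> Vsp d" and Ly: "Lc d (Suc n) y" using y by (auto simp: Lsub_char)
  have V: "act d H y \<in> Vsp d" using act_Vsp[OF Od_zout[OF H] yV] .
  have f: "\<forall>k\<in>{1..d-1}. fst (act d H y) k = 0"
  proof
    fix k assume k: "k \<in> {1..d-1}"
    have "\<forall>a\<in>{1..m}. fst y a = 0" using Ly unfolding Lc_def m_def by auto
    hence "(\<Sum>a=1..d. H k a * fst y a) = fst y k" using P1b k unfolding m_def by auto
    thus "fst (act d H y) k = 0" using Ly k unfolding Lc_def act_def by simp
  qed
  have s: "\<forall>i'\<in>{2..Suc (Suc n)}. \<forall>k\<in>{1..d-i'}. snd (act d H y) k (d-i'+2) = 0"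
  proof (intro ballI)
    fix i' k assume i': "i' \<in> {2..Suc (Suc n)}" and k: "k \<in> {1..d-i'}"
    have j: "d - i' + 2 \<in> {1..d}" "m < d - i' + 2" using i' nd unfolding m_def by auto
    have e: "snd (act d H y) k (d-i'+2) = (\<Sum>a=1..d. H k a * snd y a (d-i'+2))"
      using act_snd_col[OF P1[folded m_def] j] .
    show "snd (act d H y) k (d-i'+2) = 0"
    proof (cases "i' = Suc (Suc n)")
      case True
      have ee: "d - i' + 2 = d - Suc n + 1" using True nd by auto
      have "k \<in> {1..(d - Suc n) - 1}" using k True nd by auto
      thus ?thesis using e P2 unfolding ee by auto
    next
      case False
      hence i2: "i' \<in> {2..Suc n}" using i' by auto
      have z: "\<forall>a\<in>{1..d - Suc n}. snd y a (d-i'+2) = 0" using Ly i2 unfolding Lc_def by auto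
      have kd: "k \<in> {1..d}" using k by auto
      have "snd y k (d-i'+2) = 0" using Ly i2 k unfolding Lc_def by auto
      thus ?thesis using e P1b kd z by auto
    qed
  qed
  show ?thesis using V f s by (simp add: Lsub_char Lc_def)
qed

lemma f1poly_act: assumes C: "C \<in> Od d" shows "f1poly d (act d C x) = f1poly d x"
proof -
  have "f1poly d (act d C x) = (\<Sum>i=1..d. (\<Sum>j=1..d. C i j * fst x j) * (\<Sum>k=1..d. C i k * fst x k))"
    unfolding f1poly_def act_def by (simp add: power2_eq_square)
  also have "\<dots> = (\<Sum>i=1..d. \<Sum>j=1..d. \<Sum>k=1..d. C i j * C i k * (fst x j * fst x k))"
    by (simp add: sum_distrib_left sum_distrib_right mult_ac)
  also have "\<dots> = (\<Sum>j=1..d. \<Sum>i=1..d. \<Sum>k=1..d. C i j * C i k * (fst x j * fst x k))" by (rule sum.swap)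
  also have "\<dots> = (\<Sum>j=1..d. \<Sum>k=1..d. \<Sum>i=1..d. C i j * C i k * (fst x j * fst x k))"
    by (rule sum.cong[OF refl], rule sum.swap)
  also have "\<dots> = (\<Sum>j=1..d. \<Sum>k=1..d. (\<Sum>i=1..d. C i j * C i k) * (fst x j * fst x k))"
    by (simp add: sum_distrib_right)
  also have "\<dots> = (\<Sum>j=1..d. \<Sum>k=1..d. (if j = k then 1 else 0) * (fst x j * fst x k))"
    using Od_trans[OF C] by (intro sum.cong refl) simp
  also have "\<dots> = (\<Sum>j=1..d. fst x j * fst x j)"
    by (intro sum.cong refl) (simp only: sum_delta1)
  also have "\<dots> = f1poly d x" unfolding f1poly_def by (simp add: power2_eq_square)
  finally show ?thesis .
qed

lemma stab_normal:
  assumes d: "d \<ge> 2" and y: "y \<in> Lsub d (d-1)" and v: "fst y d \<noteq> 0"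
    and sd: "\<forall>m\<in>{1..d-1}. snd y m (Suc m) \<noteq> 0" and A: "A \<in> Od d" and fx: "act d A y = y"
  shows "A = idm d"
proof -
  have n: "d - 1 = Suc (d - 2)" using d by simp
  have yV: "y \<in> Vsp d" and Ly: "Lc d (d-1) y" using y Lsub_char[of d "d-2"] n by auto
  have zA: "zout d A" using Od_zout[OF A] .
  have fixv: "(\<Sum>j=1..d. A i j * fst y j) = fst y i" for i
    using arg_cong[OF fx, of "\<lambda>z. fst z i"] unfolding act_def by simp
  have fixM: "(\<Sum>j=1..d. \<Sum>k=1..d. A i j * snd y j k * A l k) = snd y i l" for i l
    using arg_cong[OF fx, of "\<lambda>z. snd z i l"] unfolding act_def by simp
  have fz: "fst y j = 0" if "j \<noteq> d" for j
  proof (cases "j \<in> {1..d}")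
    case True thus ?thesis using that Ly unfolding Lc_def by auto
  next
    case False thus ?thesis using Vsp_fst[OF yV] by blast
  qed
  have sumd: "(\<Sum>j=1..d. A i j * fst y j) = A i d * fst y d" for i
    by (rule trans[OF sum.mono_neutral_right[of "{1..d}" "{d}"]]) (use d fz in auto)
  have cold: "A i d = (if i = d then 1 else 0)" if "i \<in> {1..d}" for i
  proof -
    have "A i d * fst y d = fst y i" using fixv[of i] sumd[of i] by simp
    thus ?thesis using v fz[of i] by (cases "i = d") auto
  qed
  have comm: "(\<Sum>j=1..d. A i j * snd y j l) = (\<Sum>k=1..d. snd y i k * A k l)" if l: "l \<in> {1..d}" for i l
  proof -
    have "(\<Sum>k=1..d. snd y i k * A k l) = (\<Sum>k=1..d. (\<Sum>a=1..d. \<Sum>b=1..d. A i a * snd y a b * A k b) * A k l)"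
      by (intro sum.cong refl) (simp only: fixM)
    also have "\<dots> = (\<Sum>k=1..d. \<Sum>a=1..d. \<Sum>b=1..d. A i a * snd y a b * (A k b * A k l))"
      by (simp add: sum_distrib_right sum_distrib_left mult_ac)
    also have "\<dots> = (\<Sum>a=1..d. \<Sum>k=1..d. \<Sum>b=1..d. A i a * snd y a b * (A k b * A k l))" by (rule sum.swap)
    also have "\<dots> = (\<Sum>a=1..d. \<Sum>b=1..d. \<Sum>k=1..d. A i a * snd y a b * (A k b * A k l))"
      by (rule sum.cong[OF refl], rule sum.swap)
    also have "\<dots> = (\<Sum>a=1..d. \<Sum>b=1..d. A i a * snd y a b * (\<Sum>k=1..d. A k b * A k l))"
      by (simp add: sum_distrib_left)
    also have "\<dots> = (\<Sum>a=1..d. \<Sum>b=1..d. (if l = b then 1 else 0) * (A i a * snd y a b))"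
      using Od_trans[OF A] l by (intro sum.cong refl) (auto simp: mult_ac)
    also have "\<dots> = (\<Sum>a=1..d. A i a * snd y a l)"
      using l by (intro sum.cong refl) (simp only: sum_delta1)
    finally show ?thesis by simp
  qed
  have colstep: "A i m = (if i = m then 1 else 0)"
    if m: "m \<in> {1..d-1}" and IH: "\<forall>j. m < j \<and> j \<le> d \<longrightarrow> (\<forall>i\<in>{1..d}. A i j = (if i = j then 1 else 0))"
      and i: "i \<in> {1..d}" for i m
  proof -
    define u where "u j = snd y j (Suc m)" for j
    have m1: "Suc m \<in> {1..d}" using m by auto
    have "(\<Sum>j=1..d. A i j * u j) = (\<Sum>k=1..d. snd y i k * A k (Suc m))" unfolding u_def using comm[OF m1] .
    also have "\<dots> = (\<Sum>k=1..d. (if Suc m = k then 1 else 0) * snd y i k)"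
      using IH m by (intro sum.cong refl) auto
    also have "\<dots> = u i" unfolding u_def using sum_delta1[OF m1] by simp
    finally have e1: "(\<Sum>j=1..d. A i j * u j) = u i" .
    have "(\<Sum>j=1..d. (A i j - (if i = j then 1 else 0)) * u j) = (\<Sum>j=1..d. A i j * u j) - (\<Sum>j=1..d. (if i = j then 1 else 0) * u j)"
      by (simp add: algebra_simps sum_subtractf)
    also have "\<dots> = 0" using e1 sum_delta1[OF i, of u] by simp
    finally have e2: "(\<Sum>j=1..d. (A i j - (if i = j then 1 else 0)) * u j) = 0" .
    have uz: "u j = 0" if "j \<in> {1..d}" "j < m" for j
    proof -
      have "d - (d - m + 1) + 2 = Suc m" "j \<in> {1..d - (d - m + 1)}" "d - m + 1 \<in> {2..d-1}" using that m by auto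
      thus ?thesis using Ly unfolding Lc_def u_def by metis
    qed
    have "(\<Sum>j=1..d. (A i j - (if i = j then 1 else 0)) * u j) = (A i m - (if i = m then 1 else 0)) * u m"
    proof (rule trans[OF sum.mono_neutral_right[of "{1..d}" "{m}"]])
      show "\<forall>j\<in>{1..d} - {m}. (A i j - (if i = j then 1 else 0)) * u j = 0"
      proof
        fix j assume j: "j \<in> {1..d} - {m}"
        show "(A i j - (if i = j then 1 else 0)) * u j = 0"
        proof (cases "j < m")
          case True thus ?thesis using uz j by auto
        next
          case False
          hence "m < j \<and> j \<le> d" using j by auto
          hence "A i j = (if i = j then 1 else 0)" using IH i by blast
          thus ?thesis by simp
        qed
      qed
    qed (use m in auto)
    hence "(A i m - (if i = m then 1 else 0)) * u m = 0" using e2 by simp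
    moreover have "u m \<noteq> 0" using sd m unfolding u_def by auto
    ultimately show ?thesis by simp
  qed
  have cols: "\<forall>j. d - n \<le> j \<and> j \<le> d \<and> 1 \<le> j \<longrightarrow> (\<forall>i\<in>{1..d}. A i j = (if i = j then 1 else 0))" for n
  proof (induction n)
    case 0 thus ?case using cold by auto
  next
    case (Suc n)
    show ?case
    proof (intro allI impI ballI)
      fix j i assume j: "d - Suc n \<le> j \<and> j \<le> d \<and> 1 \<le> j" and i: "i \<in> {1..d}"
      show "A i j = (if i = j then 1 else 0)"
      proof (cases "d - n \<le> j")
        case True thus ?thesis using Suc j i by blast
      next
        case False
        hence jm: "j \<in> {1..d-1}" and IH: "\<forall>k. j < k \<and> k \<le> d \<longrightarrow> (\<forall>i\<in>{1..d}. A i k = (if i = k then 1 else 0))"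
          using j Suc by auto
        show ?thesis using colstep[OF jm IH i] .
      qed
    qed
  qed
  show ?thesis
  proof (rule ext, rule ext)
    fix i j show "A i j = idm d i j"
    proof (cases "i \<in> {1..d} \<and> j \<in> {1..d}")
      case True thus ?thesis using cols[of d] unfolding idm_def by auto
    next
      case False thus ?thesis using zA unfolding zout_def idm_def by auto
    qed
  qed
qed

lemma f1poly_polyfun: "f1poly d \<in> polyfun d"
proof -
  have "(\<lambda>x. \<Sum>i\<in>{1..d}. fst x i * fst x i) \<in> polyfun d"
  proof (rule polyfun_sum, simp, rule ballI)
    fix i assume "i \<in> {1..d}"
    thus "(\<lambda>x. fst x i * fst x i) \<in> polyfun d" by (intro polyfun.mult polyfun.coord_v)
  qed
  thus ?thesis unfolding f1poly_def by (simp add: power2_eq_square)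
qed

lemma zero_Vsp: "((\<lambda>_. 0), (\<lambda>_ _. 0)) \<in> Vsp d" by (rule VspI) auto

theorem corollary3p9:
  fixes d :: nat and f :: "nat \<Rightarrow> ratfn"
  assumes "d \<ge> 2"
    and "\<forall>k\<in>{1..d}. is_ratfun d (f k)"
    and "rat_eq d (f 1) (f1poly d, \<lambda>x. 1)"
    and "\<forall>i\<in>{2..d}. O_invariant d (f i) \<and> restricts_to d (f i) (Lsub d (i - 1)) (gtarget d i)"
  shows "\<forall>x\<in>Ud d f. \<forall>A\<in>Od d. act d A x = x \<longrightarrow> A = idm d"
proof (intro ballI impI)
  fix x A assume xU: "x \<in> Ud d f" and A: "A \<in> Od d" and fx: "act d A x = x"
  have d: "d \<ge> 2" using assms(1) .
  have rf: "\<And>k. k \<in> {1..d} \<Longrightarrow> is_ratfun d (f k)" using assms(2) by blast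
  have xV: "x \<in> Vsp d" using xU unfolding Ud_def by blast
  have dom: "\<And>k. k \<in> {1..d} \<Longrightarrow> x \<in> rat_dom d (f k)" using xU unfolding Ud_def by blast
  have nz: "\<And>k. k \<in> {1..d} \<Longrightarrow> rat_val d (f k) x \<noteq> 0"
  proof -
    fix k assume k: "k \<in> {1..d}"
    have "(\<Prod>k=1..d. rat_val d (f k) x) \<noteq> 0" using xU unfolding Ud_def by blast
    thus "rat_val d (f k) x \<noteq> 0" using k by auto
  qed
  have inv: "\<And>i. i \<in> {2..d} \<Longrightarrow> O_invariant d (f i)" using assms(4) by blast
  have res: "\<And>i. i \<in> {2..d} \<Longrightarrow> restricts_to d (f i) (Lsub d (i - 1)) (gtarget d i)" using assms(4) by blast
  have orb: "\<And>C i. C \<in> Od d \<Longrightarrow> i \<in> {2..d} \<Longrightarrow> act d C x \<in> rat_dom d (f i) \<and> rat_val d (f i) (act d C x) = rat_val d (f i) x"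
    by (rule invariance) (use rf inv dom in auto)
  have resv: "\<And>i y. i \<in> {2..d} \<Longrightarrow> y \<in> Lsub d (i - 1) \<Longrightarrow> y \<in> rat_dom d (f i) \<Longrightarrow> rat_val d (f i) y = gtarget d i y"
  proof -
    fix i y assume i: "i \<in> {2..d}" and y: "y \<in> Lsub d (i - 1)" "y \<in> rat_dom d (f i)"
    have e: "i - 1 = Suc (i - 2)" using i by auto
    show "rat_val d (f i) y = gtarget d i y"
      by (rule restrict_val[OF res[OF i] rf]) (use i y e Lsub_Vsp[of d "i-2"] linecl_Lsub[of d "i-2"] gtarget_polyV[OF i] in auto)
  qed
  have G1: "is_ratfun d (f1poly d, \<lambda>x. 1)"
    unfolding is_ratfun_def using f1poly_polyfun zero_Vsp polyfun.const[of 1 d] by auto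
  have f1x: "f1poly d x \<noteq> 0"
  proof -
    have "rat_val d (f 1) x = f1poly d x"
      using rat_val_eq[OF ratfun_rfV[OF rf] G1 assms(3) xV] d by simp
    thus ?thesis using nz[of 1] d by simp
  qed
  have N: "\<forall>n. Suc n \<le> d - 1 \<longrightarrow> (\<exists>C\<in>Od d. act d C x \<in> Lsub d (Suc n))"
  proof
    fix n show "Suc n \<le> d - 1 \<longrightarrow> (\<exists>C\<in>Od d. act d C x \<in> Lsub d (Suc n))"
    proof (induction n)
      case 0
      have g: "(\<Sum>k=1..d. (fst x k)\<^sup>2) \<noteq> 0" using f1x unfolding f1poly_def .
      obtain H where H: "H \<in> Od d"
        and P2: "\<forall>z k. k \<in> {1..d-1} \<longrightarrow> (\<forall>a\<in>{1..d}. z a = fst x a) \<longrightarrow> (\<Sum>a=1..d. H k a * z a) = 0"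
        using reflection[of d d "fst x", OF _ order_refl g] d by auto
      have "act d H x \<in> Lsub d 1" using base_L[OF xV H d P2] .
      thus ?case using H by auto
    next
      case (Suc n)
      show ?case
      proof
        assume nd: "Suc (Suc n) \<le> d - 1"
        then obtain C where C: "C \<in> Od d" and y: "act d C x \<in> Lsub d (Suc n)" using Suc by auto
        define y where "y = act d C x"
        define i where "i = Suc (Suc n)"
        have i: "i \<in> {2..d}" "i \<noteq> d" using nd unfolding i_def by auto
        have ydom: "y \<in> rat_dom d (f i)" and yval: "rat_val d (f i) y = rat_val d (f i) x"
          using orb[OF C i(1)] y_def by auto
        have yL: "y \<in> Lsub d (i - 1)" using y unfolding y_def i_def by simp
        have "gtarget d i y \<noteq> 0" using resv[OF i(1) yL ydom] yval nz[of i] i(1) by auto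
        hence g: "(\<Sum>k=1..d - Suc n. (snd y k (d - Suc n + 1))\<^sup>2) \<noteq> 0"
        proof -
          have e: "d - i + 1 = d - Suc n" "d - i + 2 = d - Suc n + 1" using nd unfolding i_def by auto
          assume "gtarget d i y \<noteq> 0"
          thus ?thesis using i(2) unfolding gtarget_def e by simp
        qed
        have m: "1 \<le> d - Suc n" "d - Suc n \<le> d" using nd by auto
        obtain H where H: "H \<in> Od d"
          and P1: "\<forall>z k. k \<in> {1..d} \<longrightarrow> (d - Suc n) < k \<longrightarrow> (\<Sum>a=1..d. H k a * z a) = z k"
          and P1b: "\<forall>z k. k \<in> {1..d} \<longrightarrow> (\<forall>a\<in>{1..d - Suc n}. z a = 0) \<longrightarrow> (\<Sum>a=1..d. H k a * z a) = z k"
          and P2: "\<forall>z k. k \<in> {1..(d - Suc n) - 1} \<longrightarrow> (\<forall>a\<in>{1..d - Suc n}. z a = snd y a (d - Suc n + 1)) \<longrightarrow> (\<Sum>a=1..d. H k a * z a) = 0"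
          using reflection[OF m g] by blast
        have "act d H y \<in> Lsub d (Suc (Suc n))"
          using step_L[OF y[folded y_def] H nd P1 P1b P2] .
        moreover have "act d H y = act d (mmul d H C) x" unfolding y_def by (rule act_comp)
        moreover have "mmul d H C \<in> Od d" using Od_mmul[OF H C] .
        ultimately show "\<exists>C\<in>Od d. act d C x \<in> Lsub d (Suc (Suc n))" by auto
      qed
    qed
  qed
  have dd: "Suc (d - 2) = d - 1" using d by simp
  obtain C where C: "C \<in> Od d" and x'L: "act d C x \<in> Lsub d (d - 1)"
    using N[rule_format, of "d-2"] d dd by auto
  define x' where "x' = act d C x"
  have x'L': "x' \<in> Lsub d (d - 1)" using x'L x'_def by simp
  have x'V: "x' \<in> Vsp d" and Lx': "Lc d (d-1) x'" using x'L' Lsub_char[of d "d-2"] dd by auto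
  have v': "fst x' d \<noteq> 0"
  proof -
    have "f1poly d x' = f1poly d x" unfolding x'_def using f1poly_act[OF C] .
    moreover have "f1poly d x' = (\<Sum>k\<in>{d}. (fst x' k)\<^sup>2)" unfolding f1poly_def
      by (rule sum.mono_neutral_right) (use d Lx' in \<open>auto simp: Lc_def\<close>)
    ultimately have "(fst x' d)\<^sup>2 \<noteq> 0" using f1x by simp
    thus ?thesis by simp
  qed
  have sd: "\<forall>m\<in>{1..d-1}. snd x' m (Suc m) \<noteq> 0"
  proof
    fix m assume m: "m \<in> {1..d-1}"
    define i where "i = d - m + 1"
    have i: "i \<in> {2..d}" and e: "d - i + 1 = m" "d - i + 2 = Suc m" using m unfolding i_def by auto
    have x'dom: "x' \<in> rat_dom d (f i)" and x'val: "rat_val d (f i) x' = rat_val d (f i) x"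
      using orb[OF C i] x'_def by auto
    have "1 \<le> i - 1" "i - 1 \<le> d - 1" using i by auto
    hence "x' \<in> Lsub d (i - 1)" using x'L' Lsub_mono[of "i - 1" "d - 1" d] by blast
    hence "gtarget d i x' \<noteq> 0" using resv[OF i _ x'dom] x'val nz[of i] i by auto
    thus "snd x' m (Suc m) \<noteq> 0" using gtarget_L[OF d i x'L'] e by simp
  qed
  define A' where "A' = mmul d C (mmul d A (trm C))"
  have A'O: "A' \<in> Od d" unfolding A'_def using Od_mmul[OF C Od_mmul[OF A Od_trm[OF C]]] .
  have zA: "zout d A" and zC: "zout d C" using A C Od_zout by auto
  have A'C: "mmul d A' C = mmul d C A"
    unfolding A'_def mmul_assoc Od_inv1[OF C] mmul_idm_right[OF zA] ..
  have "act d A' x' = x'"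
    unfolding x'_def act_comp A'C act_comp[symmetric] fx ..
  hence A'I: "A' = idm d" using stab_normal[OF d x'L' v' sd A'O] by simp
  have "C = mmul d C A" using A'C unfolding A'I mmul_idm_left[OF zC] .
  hence "mmul d (trm C) C = mmul d (trm C) (mmul d C A)" by simp
  also have "\<dots> = A" unfolding mmul_assoc[symmetric] Od_inv1[OF C] mmul_idm_left[OF zA] ..
  finally show "A = idm d" using Od_inv1[OF C] by simp
qed

end
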